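(* A flag $Z=(g,V)$ is a sudoku flag and subsquares of $R(M_Z)$ are latin squares if and only if $Z$ can be written $$ Z=\left[ \begin{array}{ccc} 1 & 0 & 0 \\ 0 & 1 & 1 \\ a & b & 0 \\ c & d & \beta \end{array} \right], $$ where $b$ and $\beta$ are nonzero and $\Gamma =\begin{pmatrix} a & b\\c &d \end{pmatrix}$ is nonsingular.
   Context: Let $\mathbb F$ be the finite field of order $q$. Locations of a sudoku solution of order $q^2$ are identified with $\mathbb F^4$: location $x_1x_2x_3x_4$ lies in large row $x_1$, row $x_2$ within that large row, large column $x_3$, column $x_4$ within that large column. A two-dimensional subspace $g\subset\mathbb F^4$ generates a (parallel-type) linear sudoku solution, in which the set of locations of each symbol is a coset of $g$, precisely when $g$ meets each of $\langle 1000,0100\rangle$, $\langle 0010,0001\rangle$, $\langle 0100,0001\rangle$ trivially. A flag is a pair $Z=(g,V)$ of subspaces of $\mathbb F^4$ with $\dim g=2$, $\dim V=3$, $g\subset V$; it is a sudoku flag if $g$ generates a linear sudoku solution. A sudoku flag generates a linear sudoku solution $M_Z$ with symbols $\{0,\dots,q^2-1\}$ (written in base $q$ as radix digit and units digit) such that each coset of $g$ houses exactly one symbol and each coset of $V$ houses exactly one radix digit. $R(M_Z)$, the radix solution, is the square of radix digits of the symbols of $M_Z$. The notation $[v_1\ v_2\ v_3]$ denotes the flag $(\langle v_1,v_2\rangle,\langle v_1,v_2,v_3\rangle)$, with the $v_i$ written as columns. *)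

theory Defs
  imports "HOL-Analysis.Analysis"
begin

text \<open>Locations of a sudoku of order q^2 are F^4, modelled as 'a^4 over a finite field 'a.
  Coordinates x1 x2 x3 x4 are the components 1,2,3,4.\<close>

definition vec4 :: "'a \<Rightarrow> 'a \<Rightarrow> 'a \<Rightarrow> 'a \<Rightarrow> 'a ^ 4" where
  "vec4 x1 x2 x3 x4 = (\<chi> i. if i = 1 then x1 else if i = 2 then x2 else if i = 3 then x3 else x4)"

definition is_flag :: "('a::field ^ 4) set \<Rightarrow> ('a ^ 4) set \<Rightarrow> bool" where
  "is_flag g V \<longleftrightarrow> vec.subspace g \<and> vec.subspace V \<and> vec.dim g = 2 \<and> vec.dim V = 3 \<and> g \<subseteq> V"

definition generates_linear_sudoku :: "('a::field ^ 4) set \<Rightarrow> bool" where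
  "generates_linear_sudoku g \<longleftrightarrow>
     g \<inter> vec.span {vec4 1 0 0 0, vec4 0 1 0 0} = {0} \<and>
     g \<inter> vec.span {vec4 0 0 1 0, vec4 0 0 0 1} = {0} \<and>
     g \<inter> vec.span {vec4 0 1 0 0, vec4 0 0 0 1} = {0}"

definition sudoku_flag :: "('a::field ^ 4) set \<Rightarrow> ('a ^ 4) set \<Rightarrow> bool" where
  "sudoku_flag g V \<longleftrightarrow> is_flag g V \<and> generates_linear_sudoku g"

text \<open>The radix solution R(M_Z): the radix digit at a location is determined by the coset
  of V containing it, distinct cosets carrying distinct digits.  We identify each radix
  digit with the coset of V housing it (latinness is invariant under relabelling symbols).\<close>
definition radix_square :: "('a::field ^ 4) set \<Rightarrow> 'a ^ 4 \<Rightarrow> ('a ^ 4) set" where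
  "radix_square V x = (\<lambda>v. x + v) ` V"

definition radix_digits :: "('a::field ^ 4) set \<Rightarrow> ('a ^ 4) set set" where
  "radix_digits V = range (radix_square V)"

text \<open>The subsquare in large row x1 and large column x3 is indexed by (x2, x4).  It is a
  latin square if every row (fixed x2) and every column (fixed x4) contains every radix
  digit exactly once.\<close>
definition subsquares_latin :: "('a::field ^ 4) set \<Rightarrow> bool" where
  "subsquares_latin V \<longleftrightarrow>
     (\<forall>x1 x3. (\<forall>x2. bij_betw (\<lambda>x4. radix_square V (vec4 x1 x2 x3 x4)) UNIV (radix_digits V)) \<and>
              (\<forall>x4. bij_betw (\<lambda>x2. radix_square V (vec4 x1 x2 x3 x4)) UNIV (radix_digits V)))"

definition flag_of :: "'a::field ^ 4 \<Rightarrow> 'a ^ 4 \<Rightarrow> 'a ^ 4 \<Rightarrow> ('a ^ 4) set \<times> ('a ^ 4) set" where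
  "flag_of v1 v2 v3 = (vec.span {v1, v2}, vec.span {v1, v2, v3})"

end

theory Submission
  imports Defs
begin


lemma vec4_nth[simp]:
  "vec4 x1 x2 x3 x4 $ 1 = x1" "vec4 x1 x2 x3 x4 $ 2 = x2"
  "vec4 x1 x2 x3 x4 $ 3 = x3" "vec4 x1 x2 x3 x4 $ 4 = x4"
  by (simp_all add: vec4_def)

lemma vec4_eq_iff: "(x::'a^4) = y \<longleftrightarrow> x$1 = y$1 \<and> x$2 = y$2 \<and> x$3 = y$3 \<and> x$4 = y$4"
  by (simp add: vec_eq_iff forall_4)

lemma vec4_ops[simp]:
  "vec4 a b c d + vec4 a' b' c' d' = vec4 (a+a') (b+b') (c+c') (d+d')"
  "vec4 a b c d - vec4 a' b' c' d' = vec4 (a-a') (b-b') (c-c') (d-d')"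
  "k *s vec4 a b c d = vec4 (k*a) (k*b) (k*c) (k*d)"
  "(0::'b::field^4) = vec4 0 0 0 0"
  by (simp_all add: vec4_eq_iff)

lemma vec4_all: "(x::'a^4) = vec4 (x$1) (x$2) (x$3) (x$4)"
  by (simp add: vec4_eq_iff)

lemma vec4_inj[simp]: "vec4 a b c d = vec4 a' b' c' d' \<longleftrightarrow> a=a' \<and> b=b' \<and> c=c' \<and> d=d'"
  by (simp add: vec4_eq_iff)

lemma span2: "vec.span {x, y} = {s *s x + t *s y | s t. True}"
proof (rule set_eqI, rule iffI)
  fix v assume "v \<in> vec.span {x, y}"
  then obtain k k' where "v - k *s x = k' *s y" by (auto simp: vec.span_insert vec.span_singleton)
  then have "v = k *s x + k' *s y" by (simp add: algebra_simps)
  then show "v \<in> {s *s x + t *s y | s t. True}" by blast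
next
  fix v assume "v \<in> {s *s x + t *s y | s t. True}"
  then obtain s t where "v = s *s x + t *s y" by blast
  then show "v \<in> vec.span {x, y}"
  proof -
    have "v - s *s x = t *s y" using \<open>v = _\<close> by simp
    then show ?thesis unfolding vec.span_insert vec.span_singleton by auto
  qed
qed

lemma span3: "vec.span {x, y, z} = {s *s x + t *s y + r *s z | s t r. True}"
proof (rule set_eqI, rule iffI)
  fix v assume "v \<in> vec.span {x, y, z}"
  then obtain k k' k'' where "v - k *s x - k' *s y = k'' *s z" by (auto simp: vec.span_insert vec.span_singleton)
  then have "v = k *s x + k' *s y + k'' *s z" by (simp add: algebra_simps)
  then show "v \<in> {s *s x + t *s y + r *s z | s t r. True}" by blast
next
  fix v assume "v \<in> {s *s x + t *s y + r *s z | s t r. True}"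
  then obtain s t r where "v = s *s x + t *s y + r *s z" by blast
  then show "v \<in> vec.span {x, y, z}"
  proof -
    have "v - s *s x - t *s y = r *s z" using \<open>v = _\<close> by (simp add: algebra_simps)
    then have "v - s *s x - t *s y \<in> vec.span {z}" by (simp add: vec.span_singleton image_iff)
    then have "v - s *s x \<in> vec.span {y, z}" unfolding vec.span_insert[of y] by blast
    then show ?thesis unfolding vec.span_insert[of x] by blast
  qed
qed




lemma dim2:
  assumes "y \<noteq> (0::'a::field^4)" "x \<notin> vec.span {y}"
  shows "vec.dim (vec.span {x, y}) = 2"
proof -
  have xy: "x \<noteq> y" using assms(2) vec.span_base by blast
  have "vec.independent {x, y}"
    using assms xy by (simp add: vec.independent_insert)
  from vec.dim_span_eq_card_independent[OF this] show ?thesis using xy by simp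
qed

lemma dim3:
  assumes "z \<noteq> (0::'a::field^4)" "y \<notin> vec.span {z}" "x \<notin> vec.span {y, z}"
  shows "vec.dim (vec.span {x, y, z}) = 3"
proof -
  have yz: "y \<noteq> z" using assms(2) vec.span_base by blast
  have xy: "x \<noteq> y" "x \<noteq> z" using assms(3) vec.span_base by blast+
  have "vec.independent {x, y, z}"
    using assms xy yz by (simp add: vec.independent_insert)
  from vec.dim_span_eq_card_independent[OF this] show ?thesis using xy yz by simp
qed

lemma full4:
  assumes "vec.subspace (S::('a::field^4) set)" "vec.dim S \<ge> 4"
  shows "S = UNIV"
proof -
  have "vec.span S = vec.span UNIV"
    using vec.dim_eq_span[of S UNIV] assms vec_dim_card[where 'a='a and 'n=4] by simp
  then show ?thesis using vec.span_eq_iff[THEN iffD2, OF assms(1)] by simp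
qed

lemma coset_eq:
  assumes "vec.subspace V"
  shows "radix_square V x = radix_square V y \<longleftrightarrow> x - y \<in> V"
proof
  assume h: "radix_square V x = radix_square V y"
  have "x \<in> radix_square V x" unfolding radix_square_def
    using vec.subspace_0[OF assms] by force
  then obtain v where "v \<in> V" "x = y + v" using h unfolding radix_square_def by auto
  then show "x - y \<in> V" by simp
next
  assume h: "x - y \<in> V"
  have "x + v \<in> radix_square V y" if "v \<in> V" for v
  proof -
    have "x - y + v \<in> V" using vec.subspace_add[OF assms h that] .
    then show ?thesis unfolding radix_square_def by (auto intro!: image_eqI[of _ _ "x - y + v"])
  qed
  moreover have "y + v \<in> radix_square V x" if "v \<in> V" for v
  proof -
    have "y - x + v \<in> V" using vec.subspace_add[OF assms _ that] vec.subspace_neg[OF assms h] by simp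
    then show ?thesis unfolding radix_square_def by (auto intro!: image_eqI[of _ _ "y - x + v"])
  qed
  ultimately show "radix_square V x = radix_square V y"
    unfolding radix_square_def by auto
qed

lemma det_lemma:
  fixes a b c d s t :: "'a::field"
  assumes "a * d - b * c \<noteq> 0" "s * a + t * b = 0" "s * c + t * d = 0"
  shows "s = 0 \<and> t = 0"
proof -
  have "s * (a * d - b * c) = d * (s * a + t * b) - b * (s * c + t * d)" by (simp add: algebra_simps)
  then have "s = 0" using assms by simp
  moreover have "t * (a * d - b * c) = a * (s * c + t * d) - c * (s * a + t * b)" by (simp add: algebra_simps)
  then have "t = 0" using assms by simp
  ultimately show ?thesis by simp
qed




lemma dim_zero: "vec.dim {0::'a::field^'n} = 0"
proof -
  have "vec.dim {0::'a::field^'n} \<le> card ({}::('a^'n) set)"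
    by (rule vec.dim_le_card) auto
  then show ?thesis by simp
qed

lemma backward_sudoku:
  fixes a b c d \<beta> :: "'a::field"
  assumes "b \<noteq> 0" "a * d - b * c \<noteq> 0"
  shows "generates_linear_sudoku (vec.span {vec4 1 0 a c, vec4 0 1 b d})"
proof -
  let ?g = "vec.span {vec4 1 0 a c, vec4 0 1 b d}"
  have 1: "x = 0" if h1: "x \<in> ?g" and h2: "x \<in> vec.span {vec4 1 0 0 0, vec4 0 1 0 0}" for x
  proof -
    obtain s t where st: "x = vec4 s t (s * a + t * b) (s * c + t * d)" using h1 by (auto simp: span2)
    obtain p q where "x = vec4 p q 0 0" using h2 by (auto simp: span2)
    then have "s * a + t * b = 0" "s * c + t * d = 0" using st by auto
    then have "s = 0 \<and> t = 0" using det_lemma assms by blast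
    then show ?thesis using st by simp
  qed
  have 2: "x = 0" if h1: "x \<in> ?g" and h2: "x \<in> vec.span {vec4 0 0 1 0, vec4 0 0 0 1}" for x
  proof -
    obtain s t where st: "x = vec4 s t (s * a + t * b) (s * c + t * d)" using h1 by (auto simp: span2)
    obtain p q where "x = vec4 0 0 p q" using h2 by (auto simp: span2)
    then have "s = 0" "t = 0" using st by auto
    then show ?thesis using st by simp
  qed
  have 3: "x = 0" if h1: "x \<in> ?g" and h2: "x \<in> vec.span {vec4 0 1 0 0, vec4 0 0 0 1}" for x
  proof -
    obtain s t where st: "x = vec4 s t (s * a + t * b) (s * c + t * d)" using h1 by (auto simp: span2)
    obtain p q where "x = vec4 0 p 0 q" using h2 by (auto simp: span2)
    then have "s = 0" "t * b = 0" using st by auto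
    then have "s = 0" "t = 0" using assms(1) by auto
    then show ?thesis using st by simp
  qed
  show ?thesis unfolding generates_linear_sudoku_def
    using 1 2 3 vec.span_zero by blast
qed

lemma backward_latin:
  fixes a b c d \<beta> :: "'a::field"
  assumes bn: "b \<noteq> 0" and \<beta>n: "\<beta> \<noteq> 0"
  shows "subsquares_latin (vec.span {vec4 1 0 a c, vec4 0 1 b d, vec4 0 1 0 \<beta>})"
proof -
  define V where "V = vec.span {vec4 1 0 a c, vec4 0 1 b d, vec4 0 1 0 \<beta>}"
  have Vs: "vec.subspace V" unfolding V_def by simp
  have memV: "x \<in> V \<longleftrightarrow> (\<exists>s t r. x = vec4 s (t + r) (s * a + t * b) (s * c + t * d + r * \<beta>))" for x
    unfolding V_def span3 by auto
  show ?thesis unfolding subsquares_latin_def V_def[symmetric]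
  proof (intro allI conjI)
    fix x1 x3 x2 :: 'a
    let ?f = "\<lambda>x4. radix_square V (vec4 x1 x2 x3 x4)"
    have "inj ?f"
    proof (rule injI)
      fix u v assume "?f u = ?f v"
      then have "vec4 x1 x2 x3 u - vec4 x1 x2 x3 v \<in> V" using coset_eq[OF Vs] by blast
      then obtain s t r where h: "vec4 0 0 0 (u - v) = vec4 s (t + r) (s * a + t * b) (s * c + t * d + r * \<beta>)"
        using memV by auto
      then have "s = 0" "t * b = 0" "t + r = 0" by auto
      then have "s = 0" "t = 0" "r = 0" using bn by auto
      then show "u = v" using h by simp
    qed
    moreover have "range ?f = range (radix_square V)"
    proof (rule set_eqI, rule iffI)
      fix Y assume "Y \<in> range (radix_square V)"
      then obtain y where y: "Y = radix_square V y" by auto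
      define s where "s = x1 - y$1"
      define t where "t = (x3 - y$3 - s * a) / b"
      define r where "r = x2 - y$2 - t"
      define x4 where "x4 = y$4 + s * c + t * d + r * \<beta>"
      have "vec4 x1 x2 x3 x4 - y = vec4 s (t + r) (s * a + t * b) (s * c + t * d + r * \<beta>)"
        unfolding vec4_eq_iff using bn by (simp add: s_def t_def r_def x4_def field_simps)
      then have "vec4 x1 x2 x3 x4 - y \<in> V" using memV by blast
      then have "?f x4 = Y" using coset_eq[OF Vs] y by blast
      then show "Y \<in> range ?f" by blast
    qed auto
    ultimately show "bij_betw ?f UNIV (radix_digits V)"
      unfolding radix_digits_def bij_betw_def by blast
  next
    fix x1 x3 x4 :: 'a
    let ?f = "\<lambda>x2. radix_square V (vec4 x1 x2 x3 x4)"
    have "inj ?f"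
    proof (rule injI)
      fix u v assume "?f u = ?f v"
      then have "vec4 x1 u x3 x4 - vec4 x1 v x3 x4 \<in> V" using coset_eq[OF Vs] by blast
      then obtain s t r where h: "vec4 0 (u - v) 0 0 = vec4 s (t + r) (s * a + t * b) (s * c + t * d + r * \<beta>)"
        using memV by auto
      then have "s = 0" "t * b = 0" by auto
      then have "s = 0" "t = 0" using bn by auto
      then have "r * \<beta> = 0" using h by auto
      then have "r = 0" using \<beta>n by auto
      then show "u = v" using h \<open>s = 0\<close> \<open>t = 0\<close> by simp
    qed
    moreover have "range ?f = range (radix_square V)"
    proof (rule set_eqI, rule iffI)
      fix Y assume "Y \<in> range (radix_square V)"
      then obtain y where y: "Y = radix_square V y" by auto
      define s where "s = x1 - y$1"
      define t where "t = (x3 - y$3 - s * a) / b"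
      define r where "r = (x4 - y$4 - s * c - t * d) / \<beta>"
      define x2 where "x2 = y$2 + t + r"
      have "vec4 x1 x2 x3 x4 - y = vec4 s (t + r) (s * a + t * b) (s * c + t * d + r * \<beta>)"
        unfolding vec4_eq_iff using bn \<beta>n by (simp add: s_def t_def r_def x2_def field_simps)
      then have "vec4 x1 x2 x3 x4 - y \<in> V" using memV by blast
      then have "?f x2 = Y" using coset_eq[OF Vs] y by blast
      then show "Y \<in> range ?f" by blast
    qed auto
    ultimately show "bij_betw ?f UNIV (radix_digits V)"
      unfolding radix_digits_def bij_betw_def by blast
  qed
qed




lemma forward:
  fixes g V :: "('a::{finite,field}^4) set"
  assumes fl: "is_flag g V" and sf: "generates_linear_sudoku g" and lat: "subsquares_latin V"
  shows "\<exists>a b c d \<beta> :: 'a. (g, V) = flag_of (vec4 1 0 a c) (vec4 0 1 b d) (vec4 0 1 0 \<beta>) \<and>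
        b \<noteq> 0 \<and> \<beta> \<noteq> 0 \<and> a * d - b * c \<noteq> 0"
proof -
  have gs: "vec.subspace g" and Vs: "vec.subspace V" and dg: "vec.dim g = 2"
    and dV: "vec.dim V = 3" and gV: "g \<subseteq> V"
    using fl unfolding is_flag_def by auto
  have i12: "g \<inter> vec.span {vec4 1 0 0 0, vec4 0 1 0 0} = {0}"
   and i34: "g \<inter> vec.span {vec4 0 0 1 0, vec4 0 0 0 1} = {0}"
   and i24: "g \<inter> vec.span {vec4 0 1 0 0, vec4 0 0 0 1} = {0}"
    using sf unfolding generates_linear_sudoku_def by auto
  have e4V: "vec4 0 0 0 1 \<notin> V"
  proof
    assume h: "vec4 0 0 0 1 \<in> V"
    have "bij_betw (\<lambda>x4. radix_square V (vec4 0 0 0 x4)) UNIV (radix_digits V)"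
      using lat unfolding subsquares_latin_def by blast
    then have "inj (\<lambda>x4. radix_square V (vec4 0 0 0 x4))" by (rule bij_betw_imp_inj_on)
    moreover have "radix_square V (vec4 0 0 0 1) = radix_square V (vec4 0 0 0 0)"
      using h coset_eq[OF Vs] by simp
    ultimately have "(1::'a) = 0" by (meson injD)
    then show False by simp
  qed
  have e2V: "vec4 0 1 0 0 \<notin> V"
  proof
    assume h: "vec4 0 1 0 0 \<in> V"
    have "bij_betw (\<lambda>x2. radix_square V (vec4 0 x2 0 0)) UNIV (radix_digits V)"
      using lat unfolding subsquares_latin_def by blast
    then have "inj (\<lambda>x2. radix_square V (vec4 0 x2 0 0))" by (rule bij_betw_imp_inj_on)
    moreover have "radix_square V (vec4 0 1 0 0) = radix_square V (vec4 0 0 0 0)"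
      using h coset_eq[OF Vs] by simp
    ultimately have "(1::'a) = 0" by (meson injD)
    then show False by simp
  qed
  define W34 where "W34 = vec.span {vec4 0 0 1 0, vec4 (0::'a) 0 0 1}"
  have dW34: "vec.dim W34 = 2" unfolding W34_def
    by (rule dim2) (auto simp: vec.span_singleton)
  have dsum: "vec.dim {x + y |x y. x \<in> g \<and> y \<in> W34} = 4"
    using vec.dim_sums_Int[OF gs, of W34] i34 dg dW34 dim_zero unfolding W34_def by simp
  have sumU: "{x + y |x y. x \<in> g \<and> y \<in> W34} = UNIV"
  proof (rule full4)
    show "vec.subspace {x + y |x y. x \<in> g \<and> y \<in> W34}"
      using vec.subspace_sums[OF gs, of W34] unfolding W34_def by simp
  qed (use dsum in simp)
  have "vec4 1 0 0 0 \<in> {x + y |x y. x \<in> g \<and> y \<in> W34}" using sumU by simp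
  then obtain u w where uw: "u \<in> g" "w \<in> W34" "vec4 1 0 0 0 = u + w" by blast
  then obtain s t where "w = vec4 0 0 s t" unfolding W34_def by (auto simp: span2)
  then have "u = vec4 1 0 (-s) (-t)" using uw(3) by (simp add: vec4_eq_iff eq_neg_iff_add_eq_0)
  then obtain a c where v1g: "vec4 1 0 a c \<in> g" using uw(1) by blast
  have "vec4 0 1 0 0 \<in> {x + y |x y. x \<in> g \<and> y \<in> W34}" using sumU by simp
  then obtain u' w' where uw': "u' \<in> g" "w' \<in> W34" "vec4 0 1 0 0 = u' + w'" by blast
  then obtain s' t' where "w' = vec4 0 0 s' t'" unfolding W34_def by (auto simp: span2)
  then have "u' = vec4 0 1 (-s') (-t')" using uw'(3) by (simp add: vec4_eq_iff eq_neg_iff_add_eq_0)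
  then obtain b d where v2g: "vec4 0 1 b d \<in> g" using uw'(1) by blast
  define W24 where "W24 = vec.span {vec4 0 1 0 0, vec4 (0::'a) 0 0 1}"
  have dW24: "vec.dim W24 = 2" unfolding W24_def
    by (rule dim2) (auto simp: vec.span_singleton)
  have "vec.dim {x + y |x y. x \<in> V \<and> y \<in> W24} \<le> CARD(4)"
    by (rule order_trans[OF vec.dim_subset[OF subset_UNIV]]) (rule eq_imp_le[OF vec_dim_card])
  then have "vec.dim {x + y |x y. x \<in> V \<and> y \<in> W24} \<le> 4" by simp
  then have "vec.dim (V \<inter> W24) \<ge> 1"
    using vec.dim_sums_Int[OF Vs, of W24] dV dW24 unfolding W24_def by simp
  then have "\<not> V \<inter> W24 \<subseteq> {0}"
  proof (intro notI)
    assume ge1: "vec.dim (V \<inter> W24) \<ge> 1" and sub: "V \<inter> W24 \<subseteq> {0}"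
    have "vec.dim (V \<inter> W24) \<le> vec.dim {0::'a^4}" using sub by (rule vec.dim_subset)
    also have "\<dots> = 0" by (rule dim_zero)
    finally show False using ge1 by linarith
  qed
  then obtain w where w: "w \<in> V" "w \<in> W24" "w \<noteq> 0" by (auto simp del: vec4_ops(4))
  then obtain p r where wpr: "w = vec4 0 p 0 r" unfolding W24_def by (auto simp: span2)
  have pn: "p \<noteq> 0"
  proof
    assume "p = 0"
    then have "r \<noteq> 0" using w(3) wpr by simp
    have "(1 / r) *s w \<in> V" using vec.subspace_scale[OF Vs w(1)] .
    then have "vec4 0 0 0 1 \<in> V" using \<open>p = 0\<close> \<open>r \<noteq> 0\<close> wpr by simp
    then show False using e4V by simp
  qed
  define \<beta> where "\<beta> = r / p"
  have wV: "vec4 0 1 0 \<beta> \<in> V"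
  proof -
    have "(1 / p) *s w \<in> V" using vec.subspace_scale[OF Vs w(1)] .
    then show ?thesis using pn wpr by (simp add: \<beta>_def)
  qed
  have \<beta>n: "\<beta> \<noteq> 0" using wV e2V by auto
  have bn: "b \<noteq> 0"
  proof
    assume "b = 0"
    have "vec4 0 1 b d \<in> vec.span {vec4 0 1 0 0, vec4 0 0 0 1}"
      using \<open>b = 0\<close> by (auto simp: span2 intro!: exI[of _ 1] exI[of _ d])
    then have "vec4 0 1 b d = 0" using i24 v2g by blast
    then show False by simp
  qed
  have detn: "a * d - b * c \<noteq> 0"
  proof
    assume h: "a * d - b * c = 0"
    have "b *s vec4 1 0 a c + (- a) *s vec4 0 1 b d \<in> g"
      using vec.subspace_add[OF gs vec.subspace_scale[OF gs v1g] vec.subspace_scale[OF gs v2g]] .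
    moreover have "b *s vec4 1 0 a c + (- a) *s vec4 0 1 b d = vec4 b (-a) 0 0"
      using h by (simp add: algebra_simps)
    ultimately have x: "vec4 b (-a) 0 0 \<in> g" by simp
    have "vec4 b (-a) 0 0 \<in> vec.span {vec4 1 0 0 0, vec4 0 1 0 0}"
      by (auto simp: span2 intro!: exI[of _ b] exI[of _ "-a"])
    then have "vec4 b (-a) 0 0 = 0" using i12 x by blast
    then show False using bn by simp
  qed
  have geq: "vec.span {vec4 1 0 a c, vec4 0 1 b d} = g"
  proof (rule vec.subspace_dim_equal)
    show "vec.span {vec4 1 0 a c, vec4 0 1 b d} \<subseteq> g"
      using v1g v2g gs by (intro vec.span_minimal) auto
    have "vec.dim (vec.span {vec4 1 0 a c, vec4 0 1 b d}) = 2"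
      by (rule dim2) (auto simp: vec.span_singleton)
    then show "vec.dim g \<le> vec.dim (vec.span {vec4 1 0 a c, vec4 0 1 b d})" using dg by simp
  qed (use gs in auto)
  have Veq: "vec.span {vec4 1 0 a c, vec4 0 1 b d, vec4 0 1 0 \<beta>} = V"
  proof (rule vec.subspace_dim_equal)
    show "vec.span {vec4 1 0 a c, vec4 0 1 b d, vec4 0 1 0 \<beta>} \<subseteq> V"
      using v1g v2g gV wV Vs by (intro vec.span_minimal) auto
    have "vec.dim (vec.span {vec4 1 0 a c, vec4 0 1 b d, vec4 0 1 0 \<beta>}) = 3"
      by (rule dim3) (use bn \<beta>n in \<open>auto simp: vec.span_singleton span2\<close>)
    then show "vec.dim V \<le> vec.dim (vec.span {vec4 1 0 a c, vec4 0 1 b d, vec4 0 1 0 \<beta>})" using dV by simp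
  qed (use Vs in auto)
  show ?thesis
    using geq Veq bn \<beta>n detn unfolding flag_of_def by blast
qed


theorem proposition4p5:
  fixes g V :: "('a::{finite, field} ^ 4) set"
  assumes "is_flag g V"
  shows "(sudoku_flag g V \<and> subsquares_latin V) \<longleftrightarrow>
    (\<exists>a b c d \<beta> :: 'a.
        (g, V) = flag_of (vec4 1 0 a c) (vec4 0 1 b d) (vec4 0 1 0 \<beta>) \<and>
        b \<noteq> 0 \<and> \<beta> \<noteq> 0 \<and> a * d - b * c \<noteq> 0)"
proof
  assume "sudoku_flag g V \<and> subsquares_latin V"
  then show "\<exists>a b c d \<beta> :: 'a.
        (g, V) = flag_of (vec4 1 0 a c) (vec4 0 1 b d) (vec4 0 1 0 \<beta>) \<and>
        b \<noteq> 0 \<and> \<beta> \<noteq> 0 \<and> a * d - b * c \<noteq> 0"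
    using forward[OF assms] unfolding sudoku_flag_def by blast
next
  assume "\<exists>a b c d \<beta> :: 'a.
        (g, V) = flag_of (vec4 1 0 a c) (vec4 0 1 b d) (vec4 0 1 0 \<beta>) \<and>
        b \<noteq> 0 \<and> \<beta> \<noteq> 0 \<and> a * d - b * c \<noteq> 0"
  then obtain a b c d \<beta> :: 'a where h: "(g, V) = flag_of (vec4 1 0 a c) (vec4 0 1 b d) (vec4 0 1 0 \<beta>)"
    "b \<noteq> 0" "\<beta> \<noteq> 0" "a * d - b * c \<noteq> 0" by blast
  then have gd: "g = vec.span {vec4 1 0 a c, vec4 0 1 b d}"
    and Vd: "V = vec.span {vec4 1 0 a c, vec4 0 1 b d, vec4 0 1 0 \<beta>}"
    unfolding flag_of_def by auto
  show "sudoku_flag g V \<and> subsquares_latin V"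
    unfolding sudoku_flag_def using assms backward_sudoku[OF h(2) h(4)] backward_latin[OF h(2) h(3)]
      gd Vd by simp
qed

end
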